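(* Let $a_0,\dots,a_n\in\mathbb{R}$ and let $L_n=a_0D^n+a_1D^{n-1}+\dots+a_{n-1}D+a_n$. If $\lambda_k$ is a real nonzero root of $a_0\lambda^n+a_1\lambda^{n-1}+\dots+a_{n-1}\lambda+a_n=0$, then for every harmonic $\mathbb{R}_{0,m}$-valued function $H_k(\underline{y})$ of $\underline{y}$ the function $$f_k(X)=\exp(\lambda_kz)H_k(\underline{y})-\frac{1}{2\lambda_k}\exp(\lambda_k\overline{z})\,\partial_{\underline{y}}H_k(\underline{y})$$ is a left monogenic solution of $L_nf=0$.
   Context: Let $m\ge 2$ and let $\mathbb{R}_{0,m}$ be the real Clifford algebra generated by $e_1,\dots,e_m$ with $e_i^2=-1$ and $e_ie_j=-e_je_i$ for $i\neq j$; all products are Clifford products. Identify $(x_0,\dots,x_m)\in\mathbb{R}^{m+1}$ with $X=x_0+\sum_{j=1}^m x_je_j$, and write $z=x_0+x_1e_1$, $\overline{z}=x_0-x_1e_1$, $\underline{y}=\sum_{j=2}^m x_je_j$; for real $r$, $\exp(rz)=e^{rx_0}(\cos rx_1+e_1\sin rx_1)$ and $\exp(r\overline z)=e^{rx_0}(\cos rx_1-e_1\sin rx_1)$. Operators: $\partial_X f=\partial_{x_0}f+\sum_{j=1}^m e_j\partial_{x_j}f$, $\partial_{\underline{y}}f=\sum_{j=2}^m e_j\partial_{x_j}f$; $f$ is left monogenic if $\partial_Xf=0$. For a left monogenic $f$ the hypercomplex derivative is $Df=\frac12\big(\partial_{x_0}-\sum_{j=1}^m e_j\partial_{x_j}\big)f$,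 and $D^j$ is its $j$-fold iterate. Harmonic means $\sum_{j=2}^m\partial_{x_j}^2H=0$. *)

theory Defs
  imports "HOL-Analysis.Analysis"
begin

text \<open>Elements of the Clifford algebra R_{0,m} are represented by their coefficient
  functions on blades: a blade is a set A of generator indices (A a subset of 1..m),
  standing for e_A = e_a1 ... e_ak with a1 < ... < ak.  Points of R^{m+1} are
  functions nat => real, of which only the coordinates 0..m are used.\<close>

type_synonym clif = "nat set \<Rightarrow> real"
type_synonym point = "nat \<Rightarrow> real"

definition cl_elem :: "nat \<Rightarrow> clif \<Rightarrow> bool" where
  "cl_elem m u \<longleftrightarrow> (\<forall>A. u A \<noteq> 0 \<longrightarrow> A \<subseteq> {1..m})"

definition cl_zero :: clif where "cl_zero = (\<lambda>A. 0)"
definition cl_scalar :: "real \<Rightarrow> clif" where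
  "cl_scalar r = (\<lambda>A. if A = {} then r else 0)"
definition cl_gen :: "nat \<Rightarrow> clif" where
  "cl_gen j = (\<lambda>A. if A = {j} then 1 else 0)"
definition cl_add :: "clif \<Rightarrow> clif \<Rightarrow> clif" where
  "cl_add u v = (\<lambda>A. u A + v A)"
definition cl_smul :: "real \<Rightarrow> clif \<Rightarrow> clif" where
  "cl_smul r u = (\<lambda>A. r * u A)"
definition cl_sum :: "(nat \<Rightarrow> clif) \<Rightarrow> nat set \<Rightarrow> clif" where
  "cl_sum g J = (\<lambda>A. \<Sum>j\<in>J. g j A)"

text \<open>Sign in e_A e_B = sign * e_(A symdiff B), for e_i^2 = -1 and anticommuting generators.\<close>
definition blade_sign :: "nat set \<Rightarrow> nat set \<Rightarrow> real" where
  "blade_sign A B = (-1) ^ (card {(a, b). a \<in> A \<and> b \<in> B \<and> b < a} + card (A \<inter> B))"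

definition cl_mult :: "nat \<Rightarrow> clif \<Rightarrow> clif \<Rightarrow> clif" where
  "cl_mult m u v = (\<lambda>C. \<Sum>A\<in>Pow {1..m}. \<Sum>B\<in>Pow {1..m}.
      if (A - B) \<union> (B - A) = C then blade_sign A B * u A * v B else 0)"

text \<open>exp(r z) and exp(r zbar), z = x0 + x1 e1.\<close>
definition cl_exp_z :: "real \<Rightarrow> point \<Rightarrow> clif" where
  "cl_exp_z r X = cl_add (cl_scalar (exp (r * X 0) * cos (r * X 1)))
                         (cl_smul (exp (r * X 0) * sin (r * X 1)) (cl_gen 1))"
definition cl_exp_zbar :: "real \<Rightarrow> point \<Rightarrow> clif" where
  "cl_exp_zbar r X = cl_add (cl_scalar (exp (r * X 0) * cos (r * X 1)))
                         (cl_smul (- (exp (r * X 0) * sin (r * X 1))) (cl_gen 1))"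

text \<open>Projection onto the coordinates of y = x2 e2 + ... + xm em.\<close>
definition yproj :: "nat \<Rightarrow> point \<Rightarrow> point" where
  "yproj m X = (\<lambda>j. if 2 \<le> j \<and> j \<le> m then X j else 0)"

definition pd :: "nat \<Rightarrow> (point \<Rightarrow> real) \<Rightarrow> point \<Rightarrow> real" where
  "pd j g X = deriv (\<lambda>t. g (X(j := t))) (X j)"
definition cl_pd :: "nat \<Rightarrow> (point \<Rightarrow> clif) \<Rightarrow> point \<Rightarrow> clif" where
  "cl_pd j F X = (\<lambda>A. pd j (\<lambda>Y. F Y A) X)"

definition coord_C1 :: "nat set \<Rightarrow> point set \<Rightarrow> (point \<Rightarrow> real) \<Rightarrow> bool" where
  "coord_C1 I S g \<longleftrightarrow>
     (\<forall>j\<in>I. (\<forall>X\<in>S. (\<lambda>t. g (X(j := t))) field_differentiable (at (X j)))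
            \<and> continuous_on S (pd j g))"
definition coord_C2 :: "nat set \<Rightarrow> point set \<Rightarrow> (point \<Rightarrow> real) \<Rightarrow> bool" where
  "coord_C2 I S g \<longleftrightarrow> coord_C1 I S g \<and> (\<forall>j\<in>I. coord_C1 I S (pd j g))"

definition dirac :: "nat \<Rightarrow> (point \<Rightarrow> clif) \<Rightarrow> point \<Rightarrow> clif" where
  "dirac m F X = cl_add (cl_pd 0 F X) (cl_sum (\<lambda>j. cl_mult m (cl_gen j) (cl_pd j F X)) {1..m})"
definition dirac_y :: "nat \<Rightarrow> (point \<Rightarrow> clif) \<Rightarrow> point \<Rightarrow> clif" where
  "dirac_y m F X = cl_sum (\<lambda>j. cl_mult m (cl_gen j) (cl_pd j F X)) {2..m}"
definition hyperD :: "nat \<Rightarrow> (point \<Rightarrow> clif) \<Rightarrow> point \<Rightarrow> clif" where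
  "hyperD m F X = cl_smul (1/2)
     (cl_add (cl_pd 0 F X) (cl_smul (-1) (cl_sum (\<lambda>j. cl_mult m (cl_gen j) (cl_pd j F X)) {1..m})))"

definition left_monogenic :: "nat \<Rightarrow> point set \<Rightarrow> (point \<Rightarrow> clif) \<Rightarrow> bool" where
  "left_monogenic m S F \<longleftrightarrow> open S \<and> (\<forall>A. coord_C1 {0..m} S (\<lambda>X. F X A))
      \<and> (\<forall>X\<in>S. dirac m F X = cl_zero)"

definition harmonic_y :: "nat \<Rightarrow> point set \<Rightarrow> (point \<Rightarrow> clif) \<Rightarrow> bool" where
  "harmonic_y m \<Omega> H \<longleftrightarrow> open \<Omega> \<and> (\<forall>A. coord_C2 {2..m} \<Omega> (\<lambda>y. H y A))
      \<and> (\<forall>y\<in>\<Omega>. cl_sum (\<lambda>j. cl_pd j (cl_pd j H) y) {2..m} = cl_zero)"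

definition Lop :: "nat \<Rightarrow> nat \<Rightarrow> (nat \<Rightarrow> real) \<Rightarrow> (point \<Rightarrow> clif) \<Rightarrow> point \<Rightarrow> clif" where
  "Lop m n a F X = cl_sum (\<lambda>i. cl_smul (a i) ((hyperD m ^^ (n - i)) F X)) {0..n}"

end

theory Submission
  imports Defs
begin

definition tog :: "nat \<Rightarrow> nat set \<Rightarrow> nat set" where
  "tog j C = (if j \<in> C then C - {j} else insert j C)"

definition Lj :: "nat \<Rightarrow> nat \<Rightarrow> clif \<Rightarrow> clif" where
  "Lj m j u = (\<lambda>C. if C \<subseteq> {1..m} then blade_sign {j} (tog j C) * u (tog j C) else 0)"

lemma tog_tog[simp]: "tog j (tog j C) = C"
  unfolding tog_def by auto

lemma tog_sub: "j \<in> {1..m} \<Longrightarrow> tog j C \<subseteq> {1..m} \<longleftrightarrow> C \<subseteq> {1..m}"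
  unfolding tog_def by auto

lemma tog_comm: "tog j (tog k C) = tog k (tog j C)"
  unfolding tog_def by auto

lemma cl_mult_gen: assumes "j \<in> {1..m}" shows "cl_mult m (cl_gen j) u = Lj m j u"
proof
  fix C :: "nat set"
  have eq: "\<And>B. (({j} - B) \<union> (B - {j}) = C) \<longleftrightarrow> B = tog j C"
    unfolding tog_def by auto
  have "cl_mult m (cl_gen j) u C = (\<Sum>A\<in>Pow {1..m}. if A = {j} then
      (\<Sum>B\<in>Pow {1..m}. if B = tog j C then blade_sign {j} B * u B else 0) else 0)"
    unfolding cl_mult_def cl_gen_def
    apply (rule sum.cong[OF refl])
    subgoal for A by (cases "A = {j}") (simp_all add: eq cong: if_cong)
    done
  also have "\<dots> = (\<Sum>B\<in>Pow {1..m}. if B = tog j C then blade_sign {j} B * u B else 0)"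
    using assms by (simp add: sum.delta)
  also have "\<dots> = Lj m j u C"
    using assms tog_sub[OF assms, of C] by (simp add: sum.delta Lj_def)
  finally show "cl_mult m (cl_gen j) u C = Lj m j u C" .
qed

lemma cl_mult_scalar: "cl_mult m (cl_scalar r) u = (\<lambda>C. if C \<subseteq> {1..m} then r * u C else 0)"
proof
  fix C :: "nat set"
  have eq: "\<And>B. (({} - B) \<union> (B - {}) = C) \<longleftrightarrow> B = C" by auto
  have "cl_mult m (cl_scalar r) u C = (\<Sum>A\<in>Pow {1..m}. if A = {} then
      (\<Sum>B\<in>Pow {1..m}. if B = C then r * u B else 0) else 0)"
    unfolding cl_mult_def cl_scalar_def
    apply (rule sum.cong[OF refl])
    subgoal for A by (cases "A = {}") (simp_all add: eq blade_sign_def cong: if_cong)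
    done
  also have "\<dots> = (if C \<subseteq> {1..m} then r * u C else 0)"
    by (simp add: sum.delta)
  finally show "cl_mult m (cl_scalar r) u C = (if C \<subseteq> {1..m} then r * u C else 0)" .
qed

lemma cl_mult_add_left: "cl_mult m (cl_add a b) u = cl_add (cl_mult m a u) (cl_mult m b u)"
  unfolding cl_mult_def cl_add_def
  by (auto simp: sum.distrib[symmetric] algebra_simps intro!: sum.cong)

lemma cl_mult_smul_left: "cl_mult m (cl_smul r a) u = cl_smul r (cl_mult m a u)"
  unfolding cl_mult_def cl_smul_def
  by (auto simp: sum_distrib_left algebra_simps intro!: sum.cong)

definition cnt :: "nat \<Rightarrow> nat set \<Rightarrow> nat" where
  "cnt j B = card {b\<in>B. b < j}"

lemma blade_sign_single: "blade_sign {j} B = (-1) ^ (cnt j B + (if j \<in> B then 1 else 0))"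
proof -
  have "{(a, b). a \<in> {j} \<and> b \<in> B \<and> b < a} = (\<lambda>b. (j, b)) ` {b\<in>B. b < j}" by auto
  then have "card {(a, b). a \<in> {j} \<and> b \<in> B \<and> b < a} = cnt j B"
    unfolding cnt_def by (simp add: card_image inj_on_def)
  moreover have "card ({j} \<inter> B) = (if j \<in> B then 1 else 0)" by auto
  ultimately show ?thesis unfolding blade_sign_def by simp
qed

lemma cnt_tog_same: "cnt j (tog j B) = cnt j B"
  unfolding cnt_def tog_def by (auto intro!: arg_cong[where f=card])

lemma bs_tog_same: "blade_sign {j} (tog j B) = - blade_sign {j} B"
  unfolding blade_sign_single cnt_tog_same by (simp add: tog_def)

lemma bs_tog_other: assumes "finite B" "k \<noteq> j"
  shows "blade_sign {j} (tog k B) = (if k < j then -1 else 1) * blade_sign {j} B"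
proof -
  have mem: "(j \<in> tog k B) = (j \<in> B)" using assms unfolding tog_def by auto
  have fin: "finite {b\<in>B. b < j}" using assms by simp
  show ?thesis
  proof (cases "k < j")
    case kj: True
    show ?thesis
    proof (cases "k \<in> B")
      case True
      have "{b\<in>tog k B. b < j} = {b\<in>B. b < j} - {k}" using True \<open>k \<noteq> j\<close> unfolding tog_def by auto
      moreover have "card {b\<in>B. b < j} = Suc (card ({b\<in>B. b < j} - {k}))"
        using True kj fin by (intro card.remove) auto
      ultimately have "cnt j B = Suc (cnt j (tog k B))" unfolding cnt_def by simp
      then show ?thesis using kj unfolding blade_sign_single mem by simp
    next
      case False
      have "{b\<in>tog k B. b < j} = insert k {b\<in>B. b < j}" using False kj unfolding tog_def by auto
      then have "cnt j (tog k B) = Suc (cnt j B)"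
        unfolding cnt_def using False fin by simp
      then show ?thesis using kj unfolding blade_sign_single mem by simp
    qed
  next
    case False
    have "{b\<in>tog k B. b < j} = {b\<in>B. b < j}" using False assms unfolding tog_def by auto
    then show ?thesis using False unfolding blade_sign_single cnt_def mem by simp
  qed
qed

lemma bs_sq: "blade_sign A B * blade_sign A B = 1"
  unfolding blade_sign_def by (simp add: power_mult_distrib[symmetric])

lemma Lj_Lj_same: assumes "cl_elem m u" "j \<in> {1..m}"
  shows "Lj m j (Lj m j u) = cl_smul (-1) u"
proof
  fix C
  show "Lj m j (Lj m j u) C = cl_smul (-1) u C"
  proof (cases "C \<subseteq> {1..m}")
    case True
    then show ?thesis using tog_sub[OF assms(2), of C]
      unfolding Lj_def cl_smul_def by (simp add: bs_tog_same bs_sq)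
  next
    case False
    then show ?thesis using assms(1) unfolding Lj_def cl_smul_def cl_elem_def by auto
  qed
qed

lemma Lj_Lj_anti: assumes "j \<in> {1..m}" "k \<in> {1..m}" "j \<noteq> k"
  shows "Lj m j (Lj m k u) = cl_smul (-1) (Lj m k (Lj m j u))"
proof
  fix C
  show "Lj m j (Lj m k u) C = cl_smul (-1) (Lj m k (Lj m j u)) C"
  proof (cases "C \<subseteq> {1..m}")
    case True
    define D where "D = tog j (tog k C)"
    have sD: "D \<subseteq> {1..m}" using True tog_sub[OF assms(1)] tog_sub[OF assms(2)] unfolding D_def
      by blast
    have finD: "finite D" using sD by (meson finite_atLeastAtMost finite_subset)
    have e1: "tog j C = tog k D" unfolding D_def by (metis tog_comm tog_tog)
    have e2: "tog k C = tog j D" unfolding D_def by simp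
    have e3: "tog k (tog j C) = D" unfolding D_def by (metis tog_comm)
    have e4: "tog j (tog k C) = D" unfolding D_def by simp
    have s1: "tog j C \<subseteq> {1..m}" "tog k C \<subseteq> {1..m}" using True tog_sub[OF assms(1)] tog_sub[OF assms(2)] by auto
    have "Lj m j (Lj m k u) C = blade_sign {j} (tog k D) * (blade_sign {k} D * u D)"
      unfolding Lj_def using True s1 by (simp add: e1[symmetric] e3)
    moreover have "Lj m k (Lj m j u) C = blade_sign {k} (tog j D) * (blade_sign {j} D * u D)"
      unfolding Lj_def using True s1 by (simp add: e2[symmetric] e4)
    moreover have "blade_sign {j} (tog k D) = (if k < j then -1 else 1) * blade_sign {j} D"
      using bs_tog_other[OF finD, of k j] assms(3) by simp
    moreover have "blade_sign {k} (tog j D) = (if j < k then -1 else 1) * blade_sign {k} D"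
      using bs_tog_other[OF finD, of j k] assms(3) by simp
    ultimately show ?thesis unfolding cl_smul_def using assms(3) by auto
  next
    case False
    then show ?thesis unfolding Lj_def cl_smul_def by auto
  qed
qed

lemma Lj_elem: "cl_elem m (Lj m j u)"
  unfolding cl_elem_def Lj_def by auto

lemma Lj_add: "Lj m j (cl_add u v) = cl_add (Lj m j u) (Lj m j v)"
  unfolding Lj_def cl_add_def by (auto simp: algebra_simps)
lemma Lj_smul: "Lj m j (cl_smul r u) = cl_smul r (Lj m j u)"
  unfolding Lj_def cl_smul_def by (auto simp: algebra_simps)
lemma Lj_sum: "Lj m j (cl_sum g J) = cl_sum (\<lambda>i. Lj m j (g i)) J"
  unfolding Lj_def cl_sum_def by (auto simp: sum_distrib_left)
lemma Lj_zero: "Lj m j cl_zero = cl_zero"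
  unfolding Lj_def cl_zero_def by auto

lemma restrict_elem: assumes "cl_elem m u"
  shows "(\<lambda>C. if C \<subseteq> {1..m} then r * u C else 0) = cl_smul r u"
proof (rule ext)
  fix C show "(if C \<subseteq> {1..m} then r * u C else 0) = cl_smul r u C"
    using assms by (cases "C \<subseteq> {1..m}") (auto simp: cl_elem_def cl_smul_def)
qed

lemma cl_mult_gen1: "1 \<le> m \<Longrightarrow> cl_mult m (cl_gen 1) u = Lj m 1 u"
  by (rule cl_mult_gen) simp

lemma mult_exp_z: assumes "cl_elem m u" "m \<ge> 1"
  shows "cl_mult m (cl_exp_z r X) u = cl_add (cl_smul (exp (r * X 0) * cos (r * X 1)) u)
     (cl_smul (exp (r * X 0) * sin (r * X 1)) (Lj m 1 u))"
  unfolding cl_exp_z_def cl_mult_add_left cl_mult_smul_left cl_mult_scalar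
  unfolding restrict_elem[OF assms(1)] cl_mult_gen1[OF assms(2)] ..

lemma mult_exp_zbar: assumes "cl_elem m u" "m \<ge> 1"
  shows "cl_mult m (cl_exp_zbar r X) u = cl_add (cl_smul (exp (r * X 0) * cos (r * X 1)) u)
     (cl_smul (- (exp (r * X 0) * sin (r * X 1))) (Lj m 1 u))"
  unfolding cl_exp_zbar_def cl_mult_add_left cl_mult_smul_left cl_mult_scalar
  unfolding restrict_elem[OF assms(1)] cl_mult_gen1[OF assms(2)] ..

lemma box_nbhd:
  fixes W :: "point set"
  assumes "open W" "y0 \<in> W"
  shows "\<exists>d>0. \<forall>Y. (\<forall>i. \<bar>Y i - y0 i\<bar> < d) \<longrightarrow> Y \<in> W"
proof -
  obtain e where e: "e > 0" "\<And>y. dist y y0 < e \<Longrightarrow> y \<in> W"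
    using assms unfolding open_dist by blast
  define d where "d = e / 3"
  have d: "d > 0" using e unfolding d_def by simp
  have "Y \<in> W" if Y: "\<forall>i. \<bar>Y i - y0 i\<bar> < d" for Y
  proof -
    have le: "(1/2::real)^n * min (dist (Y (from_nat n)) (y0 (from_nat n))) 1 \<le> (1/2)^n * d" for n
    proof -
      have "dist (Y (from_nat n)) (y0 (from_nat n)) \<le> d" using Y by (simp add: dist_real_def less_imp_le)
      then show ?thesis by (intro mult_left_mono) auto
    qed
    have sg: "summable (\<lambda>n. (1/2::real)^n * d)"
      by (intro summable_mult2) (simp add: summable_geometric_iff)
    have sf: "summable (\<lambda>n. (1/2::real)^n * min (dist (Y (from_nat n)) (y0 (from_nat n))) 1)"
      by (rule summable_comparison_test'[OF sg, of 0]) (use le in auto)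
    have "dist Y y0 = (\<Sum>n. (1/2::real)^n * min (dist (Y (from_nat n)) (y0 (from_nat n))) 1)"
      unfolding dist_fun_def by simp
    also have "\<dots> \<le> (\<Sum>n. (1/2::real)^n * d)"
      by (rule suminf_le[OF le sf sg])
    also have "\<dots> = 2 * d"
      using suminf_geometric[of "1/2::real"] suminf_mult2[of "\<lambda>n. (1/2::real)^n" d]
      by (simp add: summable_geometric_iff)
    also have "\<dots> < e" using d unfolding d_def by simp
    finally show ?thesis by (rule e(2))
  qed
  then show ?thesis using d by blast
qed

lemma cont_upd: "continuous_on UNIV (\<lambda>t::real. (Y::point)(j := t))"
proof (intro continuous_on_coordinatewise_then_product)
  fix i show "continuous_on UNIV (\<lambda>t. (Y(j := t)) i)"
    by (cases "i = j") (auto intro: continuous_intros)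
qed

lemma open_line: assumes "open (W::point set)" shows "open {t::real. Y(j := t) \<in> W}"
  using cont_upd[of Y j] assms by (simp add: continuous_on_open_vimage[OF open_UNIV] vimage_def)

definition hd :: "nat \<Rightarrow> point set \<Rightarrow> (point \<Rightarrow> clif) \<Rightarrow> (point \<Rightarrow> clif) \<Rightarrow> bool" where
  "hd j S F F' \<longleftrightarrow> (\<forall>X\<in>S. \<forall>A. ((\<lambda>t. F (X(j := t)) A) has_field_derivative F' X A) (at (X j)))"

definition cc :: "point set \<Rightarrow> (point \<Rightarrow> clif) \<Rightarrow> bool" where
  "cc S F \<longleftrightarrow> (\<forall>A. continuous_on S (\<lambda>X. F X A))"

lemma hd_pd: "hd j S F F' \<Longrightarrow> X \<in> S \<Longrightarrow> pd j (\<lambda>Y. F Y A) X = F' X A"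
  unfolding hd_def pd_def by (simp add: DERIV_imp_deriv)

lemma hd_clpd: "hd j S F F' \<Longrightarrow> X \<in> S \<Longrightarrow> cl_pd j F X = F' X"
  unfolding cl_pd_def using hd_pd by auto

lemma hd_cong: "hd j S F F' \<Longrightarrow> (\<And>X. X \<in> S \<Longrightarrow> F'' X = F' X) \<Longrightarrow> hd j S F F''"
  unfolding hd_def by auto

lemma hd_local: assumes "open S" "hd j S F F'" "\<And>X. X \<in> S \<Longrightarrow> G X = F X"
  shows "hd j S G F'"
  unfolding hd_def
proof (intro ballI allI)
  fix X A assume X: "X \<in> S"
  have d: "((\<lambda>t. F (X(j := t)) A) has_field_derivative F' X A) (at (X j))"
    using assms(2) X unfolding hd_def by auto
  show "((\<lambda>t. G (X(j := t)) A) has_field_derivative F' X A) (at (X j))"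
    by (rule has_field_derivative_transform_within_open[OF d open_line[OF assms(1), of X j]])
       (use X assms(3) in auto)
qed

lemma hd_add: "hd j S F F' \<Longrightarrow> hd j S G G' \<Longrightarrow>
   hd j S (\<lambda>X. cl_add (F X) (G X)) (\<lambda>X. cl_add (F' X) (G' X))"
  unfolding hd_def cl_add_def by (auto intro: derivative_intros)

lemma hd_smul: assumes "\<And>X. X \<in> S \<Longrightarrow> ((\<lambda>t. c (X(j := t))) has_field_derivative c' X) (at (X j))"
  "hd j S F F'"
  shows "hd j S (\<lambda>X. cl_smul (c X) (F X)) (\<lambda>X. cl_add (cl_smul (c' X) (F X)) (cl_smul (c X) (F' X)))"
  unfolding hd_def cl_add_def cl_smul_def
proof (intro ballI allI)
  fix X A assume X: "X \<in> S"
  have "((\<lambda>t. c (X(j := t)) * F (X(j := t)) A) has_field_derivative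
      c' X * F (X(j := X j)) A + c (X(j := X j)) * F' X A) (at (X j))"
    using DERIV_mult[OF assms(1)[OF X], of "\<lambda>t. F (X(j := t)) A" "F' X A"] assms(2) X unfolding hd_def
    by (simp add: algebra_simps)
  then show "((\<lambda>t. c (X(j := t)) * F (X(j := t)) A) has_field_derivative
      c' X * F X A + c X * F' X A) (at (X j))" by simp
qed

lemma hd_csmul: "hd j S F F' \<Longrightarrow> hd j S (\<lambda>X. cl_smul r (F X)) (\<lambda>X. cl_smul r (F' X))"
  unfolding hd_def cl_smul_def by (auto intro!: DERIV_cmult)

lemma hd_Lj: "hd j S F F' \<Longrightarrow> hd j S (\<lambda>X. Lj m k (F X)) (\<lambda>X. Lj m k (F' X))"
  unfolding hd_def Lj_def by (auto intro!: DERIV_cmult)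

lemma hd_sum: "finite J \<Longrightarrow> (\<And>i. i \<in> J \<Longrightarrow> hd j S (F i) (F' i)) \<Longrightarrow>
   hd j S (\<lambda>X. cl_sum (\<lambda>i. F i X) J) (\<lambda>X. cl_sum (\<lambda>i. F' i X) J)"
  unfolding hd_def cl_sum_def by (auto intro!: DERIV_sum)

lemma cc_add: "cc S F \<Longrightarrow> cc S G \<Longrightarrow> cc S (\<lambda>X. cl_add (F X) (G X))"
  unfolding cc_def cl_add_def by (auto intro: continuous_intros)
lemma cc_smul: "continuous_on S c \<Longrightarrow> cc S F \<Longrightarrow> cc S (\<lambda>X. cl_smul (c X) (F X))"
  unfolding cc_def cl_smul_def by (auto intro: continuous_intros)
lemma cc_csmul: "cc S F \<Longrightarrow> cc S (\<lambda>X. cl_smul r (F X))"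
  unfolding cc_def cl_smul_def by (auto intro: continuous_intros)
lemma cc_Lj: assumes "cc S F" shows "cc S (\<lambda>X. Lj m k (F X))"
  unfolding cc_def Lj_def
proof
  fix A show "continuous_on S (\<lambda>X. if A \<subseteq> {1..m} then blade_sign {k} (tog k A) * F X (tog k A) else 0)"
    using assms unfolding cc_def by (cases "A \<subseteq> {1..m}") (auto intro: continuous_intros)
qed
lemma cc_sum: "(\<And>i. i \<in> J \<Longrightarrow> cc S (F i)) \<Longrightarrow> cc S (\<lambda>X. cl_sum (\<lambda>i. F i X) J)"
  unfolding cc_def cl_sum_def by (auto intro!: continuous_intros)
lemma cc_zero: "cc S (\<lambda>X. cl_zero)"
  unfolding cc_def cl_zero_def by auto

lemma yproj_upd_in: "j \<in> {2..m} \<Longrightarrow> yproj m (X(j := t)) = (yproj m X)(j := t)"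
  unfolding yproj_def by auto
lemma yproj_upd_out: "j \<notin> {2..m} \<Longrightarrow> yproj m (X(j := t)) = yproj m X"
  unfolding yproj_def by auto
lemma yproj_at: "j \<in> {2..m} \<Longrightarrow> yproj m X j = X j"
  unfolding yproj_def by auto

lemma cont_yproj: "continuous_on UNIV (yproj m)"
proof (intro continuous_on_coordinatewise_then_product)
  fix i show "continuous_on UNIV (\<lambda>X. yproj m X i)"
    unfolding yproj_def by (cases "2 \<le> i \<and> i \<le> m") (auto intro: continuous_intros)
qed

lemma open_S: "open \<Omega> \<Longrightarrow> open {X. yproj m X \<in> \<Omega>}"
  using cont_yproj[of m] by (simp add: continuous_on_open_vimage[OF open_UNIV] vimage_def)

lemma cc_comp: assumes "\<And>A. continuous_on \<Omega> (\<lambda>Y. K Y A)"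
  shows "cc {X. yproj m X \<in> \<Omega>} (\<lambda>X. K (yproj m X))"
  unfolding cc_def
proof
  fix A
  show "continuous_on {X. yproj m X \<in> \<Omega>} (\<lambda>X. K (yproj m X) A)"
    by (rule continuous_on_compose2[OF assms[of A] continuous_on_subset[OF cont_yproj]]) auto
qed

lemma hd_comp_in: assumes "j \<in> {2..m}"
  "\<And>A Y. Y \<in> \<Omega> \<Longrightarrow> (\<lambda>t. K (Y(j := t)) A) field_differentiable (at (Y j))"
  shows "hd j {X. yproj m X \<in> \<Omega>} (\<lambda>X. K (yproj m X)) (\<lambda>X. cl_pd j K (yproj m X))"
  unfolding hd_def
proof (intro ballI allI)
  fix X A assume X: "X \<in> {X. yproj m X \<in> \<Omega>}"
  have "((\<lambda>t. K ((yproj m X)(j := t)) A) has_field_derivative cl_pd j K (yproj m X) A) (at (yproj m X j))"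
    using assms(2)[of "yproj m X" A] X unfolding cl_pd_def pd_def
    by (simp add: DERIV_deriv_iff_field_differentiable)
  then show "((\<lambda>t. K (yproj m (X(j := t))) A) has_field_derivative cl_pd j K (yproj m X) A) (at (X j))"
    using assms(1) by (simp add: yproj_upd_in yproj_at)
qed

lemma hd_comp_out: assumes "j \<notin> {2..m}"
  shows "hd j S (\<lambda>X. K (yproj m X)) (\<lambda>X. cl_zero)"
  unfolding hd_def cl_zero_def using assms by (simp add: yproj_upd_out)

lemma isCont_coord: "isCont (\<lambda>X::point. X i) X0"
  using continuous_on_product_coordinates[of i] continuous_on_eq_continuous_at[OF open_UNIV] by blast

lemma pd_deriv_at: assumes "(\<lambda>t. g (P(j := t))) field_differentiable (at (P j))"
  shows "((\<lambda>t. g (P(j := t))) has_field_derivative pd j g P) (at (P j))"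
  using assms unfolding pd_def by (simp add: DERIV_deriv_iff_field_differentiable)

lemma slice_cont:
  fixes g :: "point \<Rightarrow> real"
  assumes opn: "open \<Omega>"
    and dif: "\<And>j Y. j \<in> {2..m} \<Longrightarrow> Y \<in> \<Omega> \<Longrightarrow> (\<lambda>t. g (Y(j := t))) field_differentiable (at (Y j))"
    and cnt: "\<And>j. j \<in> {2..m} \<Longrightarrow> continuous_on \<Omega> (pd j g)"
  shows "continuous_on {X. yproj m X \<in> \<Omega>} (\<lambda>X. g (yproj m X))"
proof -
  have "isCont (\<lambda>X. g (yproj m X)) X0" if X0: "yproj m X0 \<in> \<Omega>" for X0
  proof -
    define y0 where "y0 = yproj m X0"
    have y0: "y0 \<in> \<Omega>" using X0 unfolding y0_def .
    define W where "W = \<Omega> \<inter> (\<Inter>j\<in>{2..m}. (pd j g -` ball (pd j g y0) 1 \<inter> \<Omega>))"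
    have "open W" unfolding W_def
      using cnt opn by (intro open_Int open_INT) (auto simp: continuous_on_open_vimage)
    moreover have "y0 \<in> W" unfolding W_def using y0 by auto
    ultimately obtain d where d: "d > 0" "\<And>Y. (\<forall>i. \<bar>Y i - y0 i\<bar> < d) \<Longrightarrow> Y \<in> W"
      using box_nbhd by blast
    define M where "M = 1 + (\<Sum>j=2..m. \<bar>pd j g y0\<bar>)"
    have M: "\<bar>pd j g Y\<bar> \<le> M" if "Y \<in> W" "j \<in> {2..m}" for Y j
    proof -
      have "\<bar>pd j g Y - pd j g y0\<bar> < 1" using that unfolding W_def by (auto simp: dist_real_def abs_minus_commute)
      moreover have "\<bar>pd j g y0\<bar> \<le> (\<Sum>j=2..m. \<bar>pd j g y0\<bar>)"
        using that(2) by (intro member_le_sum) auto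
      ultimately show ?thesis unfolding M_def by linarith
    qed
    have y0out: "y0 i = 0" if "i \<notin> {2..m}" for i using that unfolding y0_def yproj_def by auto
    have y0in: "y0 i = X0 i" if "i \<in> {2..m}" for i using that unfolding y0_def yproj_def by auto
    have est: "\<bar>g (yproj m X) - g y0\<bar> \<le> M * (\<Sum>i=2..m. \<bar>X i - X0 i\<bar>)"
      if X: "\<forall>i\<in>{2..m}. \<bar>X i - X0 i\<bar> < d" for X
    proof -
      define z where "z k = (\<lambda>i. if 2 \<le> i \<and> i \<le> k then X i else y0 i)" for k
      have step: "k \<le> m \<longrightarrow> \<bar>g (z k) - g y0\<bar> \<le> M * (\<Sum>i=2..k. \<bar>X i - X0 i\<bar>)" for k
      proof (induction k)
        case 0
        have "z 0 = y0" unfolding z_def by auto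
        then show ?case by simp
      next
        case (Suc k)
        show ?case
        proof
          assume km: "Suc k \<le> m"
          show "\<bar>g (z (Suc k)) - g y0\<bar> \<le> M * (\<Sum>i=2..Suc k. \<bar>X i - X0 i\<bar>)"
          proof (cases "k = 0")
            case True
            have "z (Suc k) = y0" unfolding z_def using True by auto
            then show ?thesis using True by simp
          next
            case False
            let ?j = "Suc k"
            have j: "?j \<in> {2..m}" using False km by auto
            have zeq: "z (Suc k) = (z k)(?j := X ?j)" unfolding z_def using False by (auto simp: fun_eq_iff)
            have zj: "z k ?j = X0 ?j" unfolding z_def using y0in[OF j] by auto
            define T where "T = ball (X0 ?j) d"
            have inW: "(z k)(?j := t) \<in> W" if "t \<in> T" for t
            proof (rule d(2), intro allI)
              fix i
              show "\<bar>((z k)(?j := t)) i - y0 i\<bar> < d"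
              proof (cases "i = ?j")
                case True then show ?thesis using that y0in[OF j] unfolding T_def
                  by (simp add: dist_real_def abs_minus_commute)
              next
                case False
                show ?thesis
                proof (cases "2 \<le> i \<and> i \<le> k")
                  case True
                  then have "i \<in> {2..m}" using km by auto
                  then show ?thesis using False True X y0in unfolding z_def by auto
                next
                  case F2: False
                  then show ?thesis using False d(1) unfolding z_def by auto
                qed
              qed
            qed
            have der: "((\<lambda>t. g ((z k)(?j := t))) has_field_derivative pd ?j g ((z k)(?j := t))) (at t within T)"
              if "t \<in> T" for t
            proof -
              have "Wsub": "W \<subseteq> \<Omega>" unfolding W_def by auto
              have "((\<lambda>s. g (((z k)(?j := t))(?j := s))) has_field_derivative pd ?j g ((z k)(?j := t))) (at (((z k)(?j := t)) ?j))"
                by (rule pd_deriv_at[OF dif[OF j]]) (use inW[OF that] Wsub in blast)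
              then show ?thesis by (simp add: has_field_derivative_at_within)
            qed
            have bnd: "norm (g ((z k)(?j := X ?j)) - g ((z k)(?j := X0 ?j))) \<le> M * norm (X ?j - X0 ?j)"
              by (rule field_differentiable_bound[of T, OF _ der])
                 (use inW M j X d(1) in \<open>auto simp: T_def dist_real_def abs_minus_commute\<close>)
            have "(z k)(?j := X0 ?j) = z k" using zj by auto
            then have b2: "\<bar>g (z (Suc k)) - g (z k)\<bar> \<le> M * \<bar>X ?j - X0 ?j\<bar>"
              using bnd zeq by simp
            have IH: "\<bar>g (z k) - g y0\<bar> \<le> M * (\<Sum>i=2..k. \<bar>X i - X0 i\<bar>)" using Suc.IH km by simp
            have "(\<Sum>i=2..Suc k. \<bar>X i - X0 i\<bar>) = (\<Sum>i=2..k. \<bar>X i - X0 i\<bar>) + \<bar>X ?j - X0 ?j\<bar>"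
              using False by (simp add: sum.atLeast_Suc_atMost_Suc_shift)
            then show ?thesis using IH b2 by (simp add: algebra_simps)
          qed
        qed
      qed
      have "z m = yproj m X" unfolding z_def yproj_def using y0out by auto
      then show ?thesis using step[of m] by simp
    qed
    have ev: "eventually (\<lambda>X. \<forall>i\<in>{2..m}. \<bar>X i - X0 i\<bar> < d) (at X0)"
    proof (rule eventually_ball_finite, simp, intro ballI)
      fix i
      have "((\<lambda>X::point. X i) \<longlongrightarrow> X0 i) (at X0)" using isCont_coord unfolding isCont_def by blast
      from tendstoD[OF this d(1)] show "eventually (\<lambda>X. \<bar>X i - X0 i\<bar> < d) (at X0)"
        by (simp add: dist_real_def)
    qed
    have lim0: "((\<lambda>X. M * (\<Sum>i=2..m. \<bar>X i - X0 i\<bar>)) \<longlongrightarrow> M * (\<Sum>i=2..m. \<bar>X0 i - X0 i\<bar>)) (at X0)"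
      using isCont_coord by (intro tendsto_intros) (auto simp: isCont_def)
    have "((\<lambda>X. g (yproj m X) - g y0) \<longlongrightarrow> 0) (at X0)"
      by (rule Lim_null_comparison[OF _ lim0[simplified]]) (use ev est in \<open>auto elim: eventually_mono\<close>)
    then show ?thesis unfolding isCont_def y0_def by (simp add: LIM_zero_iff)
  qed
  then show ?thesis using open_S[OF opn, of m] continuous_on_eq_continuous_at by blast
qed

lemma schwarz:
  fixes g :: "point \<Rightarrow> real"
  assumes opn: "open \<Omega>" and Y: "Y \<in> \<Omega>" and jl: "j \<noteq> l"
    and dj: "\<And>Z. Z \<in> \<Omega> \<Longrightarrow> (\<lambda>t. g (Z(j := t))) field_differentiable (at (Z j))"
    and dl: "\<And>Z. Z \<in> \<Omega> \<Longrightarrow> (\<lambda>t. g (Z(l := t))) field_differentiable (at (Z l))"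
    and djl: "\<And>Z. Z \<in> \<Omega> \<Longrightarrow> (\<lambda>t. pd j g (Z(l := t))) field_differentiable (at (Z l))"
    and dlj: "\<And>Z. Z \<in> \<Omega> \<Longrightarrow> (\<lambda>t. pd l g (Z(j := t))) field_differentiable (at (Z j))"
    and c1: "continuous_on \<Omega> (pd l (pd j g))"
    and c2: "continuous_on \<Omega> (pd j (pd l g))"
  shows "pd l (pd j g) Y = pd j (pd l g) Y"
proof (rule ccontr)
  assume ne: "pd l (pd j g) Y \<noteq> pd j (pd l g) Y"
  define v1 where "v1 = pd l (pd j g) Y"
  define v2 where "v2 = pd j (pd l g) Y"
  define e where "e = \<bar>v1 - v2\<bar> / 2"
  have e: "e > 0" using ne unfolding e_def v1_def v2_def by simp
  define W where "W = \<Omega> \<inter> (pd l (pd j g) -` ball v1 e \<inter> \<Omega>) \<inter> (pd j (pd l g) -` ball v2 e \<inter> \<Omega>)"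
  have o1: "open (pd l (pd j g) -` ball v1 e \<inter> \<Omega>)" using c1 opn by (simp add: continuous_on_open_vimage)
  have o2: "open (pd j (pd l g) -` ball v2 e \<inter> \<Omega>)" using c2 opn by (simp add: continuous_on_open_vimage)
  have "open W" unfolding W_def using o1 o2 opn by (metis open_Int)
  moreover have "Y \<in> W" unfolding W_def v1_def v2_def using Y e by auto
  ultimately obtain d where d: "d > 0" "\<And>Z. (\<forall>i. \<bar>Z i - Y i\<bar> < d) \<Longrightarrow> Z \<in> W"
    using box_nbhd by blast
  define a where "a = Y j"
  define b where "b = Y l"
  define h where "h = d / 2"
  have h: "h > 0" "h < d" using d unfolding h_def by auto
  define phi where "phi s t = (Y(j := s))(l := t)" for s t
  have phij: "(phi s t)(j := u) = phi u t" for s t u unfolding phi_def using jl by (auto simp: fun_eq_iff)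
  have phil: "(phi s t)(l := u) = phi s u" for s t u unfolding phi_def by (auto simp: fun_eq_iff)
  have phijv: "phi s t j = s" "phi s t l = t" for s t unfolding phi_def using jl by auto
  have phiab: "phi a b = Y" unfolding phi_def a_def b_def by auto
  have inW: "phi s t \<in> W" if "a \<le> s" "s \<le> a + h" "b \<le> t" "t \<le> b + h" for s t
  proof (rule d(2), intro allI)
    fix i show "\<bar>phi s t i - Y i\<bar> < d"
      using that h unfolding phi_def a_def b_def by auto
  qed
  have WO: "W \<subseteq> \<Omega>" unfolding W_def by auto
  have derj: "((\<lambda>u. k (phi u t)) has_field_derivative pd j k (phi s t)) (at s)"
    if "phi s t \<in> \<Omega>" "\<And>Z. Z \<in> \<Omega> \<Longrightarrow> (\<lambda>t. k (Z(j := t))) field_differentiable (at (Z j))" for k s t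
    using pd_deriv_at[OF that(2)[OF that(1)]] by (simp add: phij phijv)
  have derl: "((\<lambda>u. k (phi s u)) has_field_derivative pd l k (phi s t)) (at t)"
    if "phi s t \<in> \<Omega>" "\<And>Z. Z \<in> \<Omega> \<Longrightarrow> (\<lambda>t. k (Z(l := t))) field_differentiable (at (Z l))" for k s t
    using pd_deriv_at[OF that(2)[OF that(1)]] by (simp add: phil phijv)
  define Delta where "Delta = g (phi (a+h) (b+h)) - g (phi (a+h) b) - g (phi a (b+h)) + g (phi a b)"
  obtain x1 where x1: "a < x1" "x1 < a + h"
    "(g (phi (a+h) (b+h)) - g (phi (a+h) b)) - (g (phi a (b+h)) - g (phi a b)) =
     h * (pd j g (phi x1 (b+h)) - pd j g (phi x1 b))"
  proof -
    have "\<exists>z. a < z \<and> z < a + h \<and> (g (phi (a+h) (b+h)) - g (phi (a+h) b)) - (g (phi a (b+h)) - g (phi a b)) =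
      (a + h - a) * (pd j g (phi z (b+h)) - pd j g (phi z b))"
      by (rule MVT2[where f = "\<lambda>s. g (phi s (b+h)) - g (phi s b)"])
         (use h in \<open>auto intro!: derivative_intros derj dj inW[THEN subsetD[OF WO]]\<close>)
    then show ?thesis using that by auto
  qed
  obtain y1 where y1: "b < y1" "y1 < b + h"
    "pd j g (phi x1 (b+h)) - pd j g (phi x1 b) = h * pd l (pd j g) (phi x1 y1)"
  proof -
    have "\<exists>z. b < z \<and> z < b + h \<and> pd j g (phi x1 (b+h)) - pd j g (phi x1 b) =
      (b + h - b) * pd l (pd j g) (phi x1 z)"
      by (rule MVT2[where f = "\<lambda>t. pd j g (phi x1 t)"])
         (use h x1 in \<open>auto intro!: derl djl inW[THEN subsetD[OF WO]]\<close>)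
    then show ?thesis using that by auto
  qed
  obtain y2 where y2: "b < y2" "y2 < b + h"
    "(g (phi (a+h) (b+h)) - g (phi a (b+h))) - (g (phi (a+h) b) - g (phi a b)) =
     h * (pd l g (phi (a+h) y2) - pd l g (phi a y2))"
  proof -
    have "\<exists>z. b < z \<and> z < b + h \<and> (g (phi (a+h) (b+h)) - g (phi a (b+h))) - (g (phi (a+h) b) - g (phi a b)) =
      (b + h - b) * (pd l g (phi (a+h) z) - pd l g (phi a z))"
      by (rule MVT2[where f = "\<lambda>t. g (phi (a+h) t) - g (phi a t)"])
         (use h in \<open>auto intro!: derivative_intros derl dl inW[THEN subsetD[OF WO]]\<close>)
    then show ?thesis using that by auto
  qed
  obtain x2 where x2: "a < x2" "x2 < a + h"
    "pd l g (phi (a+h) y2) - pd l g (phi a y2) = h * pd j (pd l g) (phi x2 y2)"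
  proof -
    have "\<exists>z. a < z \<and> z < a + h \<and> pd l g (phi (a+h) y2) - pd l g (phi a y2) =
      (a + h - a) * pd j (pd l g) (phi z y2)"
      by (rule MVT2[where f = "\<lambda>s. pd l g (phi s y2)"])
         (use h y2 in \<open>auto intro!: derj dlj inW[THEN subsetD[OF WO]]\<close>)
    then show ?thesis using that by auto
  qed
  have "h * (h * pd l (pd j g) (phi x1 y1)) = h * (h * pd j (pd l g) (phi x2 y2))"
    using x1(3) y1(3) y2(3) x2(3) by (simp add: algebra_simps)
  then have weq: "pd l (pd j g) (phi x1 y1) = pd j (pd l g) (phi x2 y2)" using h by simp
  have w1: "\<bar>pd l (pd j g) (phi x1 y1) - v1\<bar> < e"
    using inW[of x1 y1] x1 y1 unfolding W_def by (auto simp: dist_real_def abs_minus_commute)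
  have w2: "\<bar>pd j (pd l g) (phi x2 y2) - v2\<bar> < e"
    using inW[of x2 y2] x2 y2 unfolding W_def by (auto simp: dist_real_def abs_minus_commute)
  define w where "w = pd l (pd j g) (phi x1 y1)"
  have "\<bar>w - v1\<bar> < \<bar>v1 - v2\<bar> / 2" "\<bar>w - v2\<bar> < \<bar>v1 - v2\<bar> / 2"
    using w1 w2 weq unfolding e_def w_def by auto
  then show False by (simp add: abs_if split: if_split_asm)
qed

definition Fexp :: "nat \<Rightarrow> real \<Rightarrow> (point \<Rightarrow> real) \<Rightarrow> (point \<Rightarrow> real) \<Rightarrow> (point \<Rightarrow> clif) \<Rightarrow> (point \<Rightarrow> clif) \<Rightarrow> point \<Rightarrow> clif" where
  "Fexp m \<kappa> c s U V = (\<lambda>X. cl_add (cl_add (cl_smul (c X) (U X)) (cl_smul (s X) (Lj m 1 (U X))))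
     (cl_smul \<kappa> (cl_add (cl_smul (c X) (V X)) (cl_smul (- s X) (Lj m 1 (V X))))))"

lemma hd_Fexp:
  assumes dc: "\<And>X. X \<in> S \<Longrightarrow> ((\<lambda>t. c (X(j := t))) has_field_derivative c' X) (at (X j))"
    and ds: "\<And>X. X \<in> S \<Longrightarrow> ((\<lambda>t. s (X(j := t))) has_field_derivative s' X) (at (X j))"
    and hU: "hd j S U U'" and hV: "hd j S V V'"
  shows "hd j S (Fexp m \<kappa> c s U V) (\<lambda>X. cl_add (Fexp m \<kappa> c' s' U V X) (Fexp m \<kappa> c s U' V' X))"
proof -
  have dsn: "((\<lambda>t. - s (X(j := t))) has_field_derivative - s' X) (at (X j))" if "X \<in> S" for X
    using ds[OF that] by (rule DERIV_minus)
  have "hd j S (Fexp m \<kappa> c s U V) (\<lambda>X. cl_add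
     (cl_add (cl_add (cl_smul (c' X) (U X)) (cl_smul (c X) (U' X)))
             (cl_add (cl_smul (s' X) (Lj m 1 (U X))) (cl_smul (s X) (Lj m 1 (U' X)))))
     (cl_smul \<kappa> (cl_add (cl_add (cl_smul (c' X) (V X)) (cl_smul (c X) (V' X)))
             (cl_add (cl_smul (- s' X) (Lj m 1 (V X))) (cl_smul (- s X) (Lj m 1 (V' X)))))))"
    unfolding Fexp_def
    by (intro hd_add hd_smul hd_csmul hd_Lj dc ds dsn hU hV)
  then show ?thesis
    by (rule hd_cong) (simp add: Fexp_def cl_add_def cl_smul_def fun_eq_iff algebra_simps)
qed

lemma cc_Fexp: "continuous_on S c \<Longrightarrow> continuous_on S s \<Longrightarrow> cc S U \<Longrightarrow> cc S V \<Longrightarrow> cc S (Fexp m \<kappa> c s U V)"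
  unfolding Fexp_def
  by (intro cc_add cc_smul cc_csmul cc_Lj continuous_intros) auto

lemma Fexp_zero1: "Fexp m \<kappa> c s (\<lambda>X. cl_zero) (\<lambda>X. cl_zero) X = cl_zero"
  by (simp add: Fexp_def Lj_zero) (simp add: cl_add_def cl_smul_def cl_zero_def)
lemma Fexp_zero2: "Fexp m \<kappa> (\<lambda>X. 0) (\<lambda>X. 0) U V X = cl_zero"
  by (simp add: Fexp_def Lj_zero) (simp add: cl_add_def cl_smul_def cl_zero_def)
lemma add_zero_r: "cl_add u cl_zero = u" and add_zero_l: "cl_add cl_zero u = u"
  by (simp_all add: cl_add_def cl_zero_def)

lemma Lj_Fexp: "Lj m j (Fexp m \<kappa> c s U V X) =
  cl_add (cl_add (cl_smul (c X) (Lj m j (U X))) (cl_smul (s X) (Lj m j (Lj m 1 (U X)))))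
     (cl_smul \<kappa> (cl_add (cl_smul (c X) (Lj m j (V X))) (cl_smul (- s X) (Lj m j (Lj m 1 (V X))))))"
  by (simp add: Fexp_def Lj_add Lj_smul)

lemma cont_coord [continuous_intros]: "continuous_on S (\<lambda>X::point. X i)"
  by (rule continuous_on_subset[OF continuous_on_product_coordinates]) simp

lemma der_c: fixes X :: point shows "((\<lambda>t. exp (lam * (X(j := t)) 0) * cos (lam * (X(j := t)) 1)) has_field_derivative
   (if j = 0 then lam * (exp (lam * X 0) * cos (lam * X 1)) else if j = 1 then - lam * (exp (lam * X 0) * sin (lam * X 1)) else 0)) (at (X j))"
proof -
  consider "j = 0" | "j = 1" | "j \<noteq> 0 \<and> j \<noteq> 1" by blast
  then show ?thesis
  proof cases
    case 1
    have e: "(\<lambda>t. exp (lam * (X(j := t)) 0) * cos (lam * (X(j := t)) 1)) = (\<lambda>t. exp (lam * t) * cos (lam * X 1))"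
      using 1 by (auto simp: fun_eq_iff)
    show ?thesis unfolding e using 1 by (auto intro!: derivative_eq_intros)
  next
    case 2
    have e: "(\<lambda>t. exp (lam * (X(j := t)) 0) * cos (lam * (X(j := t)) 1)) = (\<lambda>t. exp (lam * X 0) * cos (lam * t))"
      using 2 by (auto simp: fun_eq_iff)
    show ?thesis unfolding e using 2 by (auto intro!: derivative_eq_intros)
  next
    case 3
    then show ?thesis by simp
  qed
qed

lemma der_s: fixes X :: point shows "((\<lambda>t. exp (lam * (X(j := t)) 0) * sin (lam * (X(j := t)) 1)) has_field_derivative
   (if j = 0 then lam * (exp (lam * X 0) * sin (lam * X 1)) else if j = 1 then lam * (exp (lam * X 0) * cos (lam * X 1)) else 0)) (at (X j))"
proof -
  consider "j = 0" | "j = 1" | "j \<noteq> 0 \<and> j \<noteq> 1" by blast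
  then show ?thesis
  proof cases
    case 1
    have e: "(\<lambda>t. exp (lam * (X(j := t)) 0) * sin (lam * (X(j := t)) 1)) = (\<lambda>t. exp (lam * t) * sin (lam * X 1))"
      using 1 by (auto simp: fun_eq_iff)
    show ?thesis unfolding e using 1 by (auto intro!: derivative_eq_intros)
  next
    case 2
    have e: "(\<lambda>t. exp (lam * (X(j := t)) 0) * sin (lam * (X(j := t)) 1)) = (\<lambda>t. exp (lam * X 0) * sin (lam * t))"
      using 2 by (auto simp: fun_eq_iff)
    show ?thesis unfolding e using 2 by (auto intro!: derivative_eq_intros)
  next
    case 3
    then show ?thesis by simp
  qed
qed

lemma clpd_zero: "(\<And>Y. K Y A = 0) \<Longrightarrow> cl_pd j K X A = 0"
  unfolding cl_pd_def pd_def by simp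

lemma clpd_elem: assumes "\<And>Y. cl_elem m (K Y)" shows "cl_elem m (cl_pd j K X)"
  unfolding cl_elem_def
proof (intro allI impI)
  fix A assume A: "cl_pd j K X A \<noteq> 0"
  show "A \<subseteq> {1..m}"
  proof (rule ccontr)
    assume "\<not> A \<subseteq> {1..m}"
    then have "K Y A = 0" for Y using assms[of Y] unfolding cl_elem_def by blast
    then show False using A clpd_zero by metis
  qed
qed

lemma cl_sum_elem: assumes "\<And>i. i \<in> J \<Longrightarrow> cl_elem m (g i)" shows "cl_elem m (cl_sum g J)"
  unfolding cl_elem_def
proof (intro allI impI)
  fix A assume A: "cl_sum g J A \<noteq> 0"
  show "A \<subseteq> {1..m}"
  proof (rule ccontr)
    assume "\<not> A \<subseteq> {1..m}"
    then have "g i A = 0" if "i \<in> J" for i using assms[OF that] unfolding cl_elem_def by blast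
    then have "cl_sum g J A = 0" unfolding cl_sum_def by simp
    then show False using A by simp
  qed
qed

lemma half_lemma: assumes "cl_add P Q = cl_zero"
  shows "cl_smul (1/2) (cl_add P (cl_smul (-1) Q)) = P"
proof
  fix A
  have "P A + Q A = 0" using assms unfolding cl_add_def cl_zero_def by metis
  then show "cl_smul (1/2) (cl_add P (cl_smul (-1) Q)) A = P A"
    unfolding cl_add_def cl_smul_def by simp
qed

lemma hyperD_from: assumes "dirac m F X = cl_zero"
  shows "hyperD m F X = cl_pd 0 F X"
  using assms unfolding dirac_def hyperD_def by (rule half_lemma)

definition Ev :: "nat \<Rightarrow> real \<Rightarrow> real \<Rightarrow> real \<Rightarrow> clif \<Rightarrow> clif \<Rightarrow> clif" where
  "Ev m \<kappa> c s U V = cl_add (cl_add (cl_smul c U) (cl_smul s (Lj m 1 U)))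
     (cl_smul \<kappa> (cl_add (cl_smul c V) (cl_smul (- s) (Lj m 1 V))))"

lemma Fexp_Ev: "Fexp m \<kappa> c s U V X = Ev m \<kappa> (c X) (s X) (U X) (V X)"
  unfolding Fexp_def Ev_def by simp

lemma harm_zero:
  assumes sym: "\<And>j l. j \<in> {2..m} \<Longrightarrow> l \<in> {2..m} \<Longrightarrow> Q j l = Q l j"
    and el: "\<And>j. j \<in> {2..m} \<Longrightarrow> cl_elem m (Q j j)"
    and tr: "cl_sum (\<lambda>j. Q j j) {2..m} = cl_zero"
  shows "cl_sum (\<lambda>j. Lj m j (cl_sum (\<lambda>l. Lj m l (Q j l)) {2..m})) {2..m} = cl_zero"
proof
  fix C
  define a where "a j l = Lj m j (Lj m l (Q j l)) C" for j l
  have anti: "a j l + a l j = 0" if "j \<in> {2..m}" "l \<in> {2..m}" "j \<noteq> l" for j l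
  proof -
    have "a l j = Lj m l (Lj m j (Q j l)) C" unfolding a_def using sym[OF that(1,2)] by simp
    also have "\<dots> = - a j l" unfolding a_def using Lj_Lj_anti[of l m j "Q j l"] that
      by (simp add: cl_smul_def)
    finally show ?thesis by simp
  qed
  have diag: "a j j = - Q j j C" if "j \<in> {2..m}" for j
    unfolding a_def using Lj_Lj_same[OF el[OF that], of j] that by (simp add: cl_smul_def)
  have trC: "(\<Sum>j=2..m. Q j j C) = 0" using tr unfolding cl_sum_def cl_zero_def by metis
  have pair: "a j l + a l j = (if l = j then 2 * a j j else 0)" if "j \<in> {2..m}" "l \<in> {2..m}" for j l
    using anti[OF that] by auto
  define T where "T = (\<Sum>j=2..m. \<Sum>l=2..m. a j l)"
  have T2: "T = (\<Sum>j=2..m. \<Sum>l=2..m. a l j)" unfolding T_def by (rule sum.swap)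
  have "(\<Sum>j=2..m. \<Sum>l=2..m. a j l + a l j) = T + (\<Sum>j=2..m. \<Sum>l=2..m. a l j)"
    unfolding T_def by (simp add: sum.distrib)
  then have "T + T = (\<Sum>j=2..m. \<Sum>l=2..m. a j l + a l j)"
    using T2 by simp
  also have "\<dots> = (\<Sum>j=2..m. \<Sum>l=2..m. (if l = j then 2 * a j j else 0))"
    using pair by (intro sum.cong refl) auto
  also have "\<dots> = (\<Sum>j=2..m. 2 * a j j)" by simp
  also have "\<dots> = (\<Sum>j=2..m. - 2 * Q j j C)" using diag by (intro sum.cong refl) auto
  also have "\<dots> = 0" using trC by (simp add: sum_negf sum_distrib_left[symmetric])
  finally have "T = 0" by simp
  then show "cl_sum (\<lambda>j. Lj m j (cl_sum (\<lambda>l. Lj m l (Q j l)) {2..m})) {2..m} C = cl_zero C"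
    unfolding T_def a_def Lj_sum by (simp add: cl_sum_def cl_zero_def)
qed

lemma key_alg:
  assumes m: "m \<ge> 2" and lam: "lam \<noteq> 0" and ka: "\<kappa> = - 1 / (2 * lam)"
    and eU: "cl_elem m U" and eV: "cl_elem m V"
    and Vd: "V = cl_sum (\<lambda>l. Lj m l (P l)) {2..m}"
    and T0: "cl_sum (\<lambda>j. Lj m j (Gd j)) {2..m} = cl_zero"
  shows "cl_add (Ev m \<kappa> (lam * c) (lam * s) U V)
     (cl_add (Lj m 1 (Ev m \<kappa> (- lam * s) (lam * c) U V))
             (cl_sum (\<lambda>j. Lj m j (Ev m \<kappa> c s (P j) (Gd j))) {2..m})) = cl_zero"
proof
  fix C
  have one: "1 \<in> {1..m}" using m by simp
  have LL1U: "Lj m 1 (Lj m 1 U) = cl_smul (-1) U" by (rule Lj_Lj_same[OF eU one])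
  have LL1V: "Lj m 1 (Lj m 1 V) = cl_smul (-1) V" by (rule Lj_Lj_same[OF eV one])
  have part1: "Lj m 1 (Ev m \<kappa> (- lam * s) (lam * c) U V) C =
     - lam * s * Lj m 1 U C - lam * c * U C + \<kappa> * (- lam * s * Lj m 1 V C + lam * c * V C)"
    unfolding Ev_def Lj_add Lj_smul LL1U LL1V by (simp add: cl_add_def cl_smul_def algebra_simps)
  have anti: "Lj m j (Lj m 1 w) = cl_smul (-1) (Lj m 1 (Lj m j w))" if "j \<in> {2..m}" for j w
    by (rule Lj_Lj_anti) (use that in auto)
  have termj: "Lj m j (Ev m \<kappa> c s (P j) (Gd j)) C =
      c * Lj m j (P j) C - s * Lj m 1 (Lj m j (P j)) C
      + \<kappa> * (c * Lj m j (Gd j) C + s * Lj m 1 (Lj m j (Gd j)) C)" if "j \<in> {2..m}" for j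
    unfolding Ev_def Lj_add Lj_smul anti[OF that] by (simp add: cl_add_def cl_smul_def algebra_simps)
  have sumP: "(\<Sum>j=2..m. Lj m j (P j) C) = V C" unfolding Vd cl_sum_def by simp
  have sumP1: "(\<Sum>j=2..m. Lj m 1 (Lj m j (P j)) C) = Lj m 1 V C"
    unfolding Vd by (subst Lj_sum) (simp add: cl_sum_def)
  have sumG: "(\<Sum>j=2..m. Lj m j (Gd j) C) = 0" using T0 unfolding cl_sum_def cl_zero_def by metis
  have sumG1: "(\<Sum>j=2..m. Lj m 1 (Lj m j (Gd j)) C) = 0"
  proof -
    have "(\<Sum>j=2..m. Lj m 1 (Lj m j (Gd j)) C) = Lj m 1 (cl_sum (\<lambda>j. Lj m j (Gd j)) {2..m}) C"
      unfolding Lj_sum by (simp add: cl_sum_def)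
    then show ?thesis unfolding T0 Lj_zero by (simp add: cl_zero_def)
  qed
  have part2: "cl_sum (\<lambda>j. Lj m j (Ev m \<kappa> c s (P j) (Gd j))) {2..m} C = c * V C - s * Lj m 1 V C"
  proof -
    have "cl_sum (\<lambda>j. Lj m j (Ev m \<kappa> c s (P j) (Gd j))) {2..m} C =
      (\<Sum>j=2..m. c * Lj m j (P j) C - s * Lj m 1 (Lj m j (P j)) C
      + \<kappa> * (c * Lj m j (Gd j) C + s * Lj m 1 (Lj m j (Gd j)) C))"
      unfolding cl_sum_def using termj by (intro sum.cong refl) auto
    also have "\<dots> = c * (\<Sum>j=2..m. Lj m j (P j) C) - s * (\<Sum>j=2..m. Lj m 1 (Lj m j (P j)) C)
      + \<kappa> * (c * (\<Sum>j=2..m. Lj m j (Gd j) C) + s * (\<Sum>j=2..m. Lj m 1 (Lj m j (Gd j)) C))"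
      by (simp add: distrib_left sum.distrib sum_subtractf sum_distrib_left)
    finally show ?thesis unfolding sumP sumP1 sumG sumG1 by simp
  qed
  have part0: "Ev m \<kappa> (lam * c) (lam * s) U V C =
     lam * c * U C + lam * s * Lj m 1 U C + \<kappa> * (lam * c * V C - lam * s * Lj m 1 V C)"
    unfolding Ev_def by (simp add: cl_add_def cl_smul_def algebra_simps)
  have kl: "2 * \<kappa> * lam = -1" using lam unfolding ka by (simp add: field_simps)
  have "lam * c * U C + lam * s * Lj m 1 U C + \<kappa> * (lam * c * V C - lam * s * Lj m 1 V C) +
    (- lam * s * Lj m 1 U C - lam * c * U C + \<kappa> * (- lam * s * Lj m 1 V C + lam * c * V C)) +
    (c * V C - s * Lj m 1 V C) = (2 * \<kappa> * lam + 1) * (c * V C - s * Lj m 1 V C)"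
    by (simp add: algebra_simps)
  also have "\<dots> = 0" using kl by simp
  finally show "cl_add (Ev m \<kappa> (lam * c) (lam * s) U V)
     (cl_add (Lj m 1 (Ev m \<kappa> (- lam * s) (lam * c) U V))
             (cl_sum (\<lambda>j. Lj m j (Ev m \<kappa> c s (P j) (Gd j))) {2..m})) C = cl_zero C"
    unfolding cl_add_def part0 part1 part2 cl_zero_def by simp
qed

lemma cl_sum_insert: "finite J \<Longrightarrow> i \<notin> J \<Longrightarrow> cl_sum g (insert i J) = cl_add (g i) (cl_sum g J)"
  unfolding cl_sum_def cl_add_def by simp

lemma cl_mult_smul_right: "cl_mult m a (cl_smul r u) = cl_smul r (cl_mult m a u)"
  unfolding cl_mult_def cl_smul_def
  by (auto simp: sum_distrib_left algebra_simps intro!: sum.cong)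

lemma dirac_scale: assumes "\<And>j. j \<in> {0..m} \<Longrightarrow> cl_pd j F X = cl_smul r (cl_pd j F0 X)"
  shows "dirac m F X = cl_smul r (dirac m F0 X)"
proof -
  have "cl_sum (\<lambda>j. cl_mult m (cl_gen j) (cl_pd j F X)) {1..m} =
        cl_sum (\<lambda>j. cl_smul r (cl_mult m (cl_gen j) (cl_pd j F0 X))) {1..m}"
    unfolding cl_sum_def using assms by (auto simp: cl_mult_smul_right intro!: sum.cong ext)
  then show ?thesis unfolding dirac_def using assms[of 0]
    by (simp add: cl_add_def cl_smul_def cl_sum_def sum_distrib_left algebra_simps)
qed

lemma cl_sum_zero: "cl_sum (\<lambda>l. Lj m l cl_zero) J = cl_zero"
  unfolding Lj_zero by (simp add: cl_sum_def cl_zero_def)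

theorem proposition2:
  fixes m n :: nat and a :: "nat \<Rightarrow> real" and lam :: real
    and \<Omega> :: "point set" and H :: "point \<Rightarrow> clif"
  assumes "m \<ge> 2"
    and "lam \<noteq> 0"
    and "(\<Sum>i=0..n. a i * lam ^ (n - i)) = 0"
    and "harmonic_y m \<Omega> H"
    and "\<forall>y. cl_elem m (H y)"
  shows "let f = (\<lambda>X. cl_add (cl_mult m (cl_exp_z lam X) (H (yproj m X)))
                    (cl_smul (- 1 / (2 * lam)) (cl_mult m (cl_exp_zbar lam X) (dirac_y m H (yproj m X)))));
             S = {X. yproj m X \<in> \<Omega>}
         in left_monogenic m S f \<and> (\<forall>X\<in>S. Lop m n a f X = cl_zero)"
proof -
  note m = assms(1) and lam = assms(2) and poly = assms(3) and harm = assms(4)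
  have eH: "cl_elem m (H y)" for y using assms(5) by blast
  have m1: "1 \<le> m" using m by simp
  have opn: "open \<Omega>" using harm unfolding harmonic_y_def by blast
  have C2: "coord_C2 {2..m} \<Omega> (\<lambda>y. H y A)" for A using harm unfolding harmonic_y_def by blast
  have lap: "cl_sum (\<lambda>j. cl_pd j (cl_pd j H) y) {2..m} = cl_zero" if "y \<in> \<Omega>" for y
    using harm that unfolding harmonic_y_def by blast
  have d1: "(\<lambda>t. H (Y(j := t)) A) field_differentiable (at (Y j))" if "j \<in> {2..m}" "Y \<in> \<Omega>" for A j Y
    using C2[of A] that unfolding coord_C2_def coord_C1_def by blast
  have c1: "continuous_on \<Omega> (pd j (\<lambda>y. H y A))" if "j \<in> {2..m}" for A j
    using C2[of A] that unfolding coord_C2_def coord_C1_def by blast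
  have d2: "(\<lambda>t. pd l (\<lambda>y. H y A) (Y(j := t))) field_differentiable (at (Y j))"
    if "j \<in> {2..m}" "l \<in> {2..m}" "Y \<in> \<Omega>" for A j l Y
    using C2[of A] that unfolding coord_C2_def coord_C1_def by blast
  have c2: "continuous_on \<Omega> (pd j (pd l (\<lambda>y. H y A)))" if "j \<in> {2..m}" "l \<in> {2..m}" for A j l
    using C2[of A] that unfolding coord_C2_def coord_C1_def by blast
  have pdH: "cl_pd l H Y A = pd l (\<lambda>y. H y A) Y" for l Y A by (simp add: cl_pd_def)
  have pdpdH: "cl_pd j (cl_pd l H) Y A = pd j (pd l (\<lambda>y. H y A)) Y" for j l Y A by (simp add: cl_pd_def)

  define \<kappa> where "\<kappa> = - 1 / (2 * lam)"
  define S where "S = {X. yproj m X \<in> \<Omega>}"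
  define c where "c = (\<lambda>X::point. exp (lam * X 0) * cos (lam * X 1))"
  define s where "s = (\<lambda>X::point. exp (lam * X 0) * sin (lam * X 1))"
  define Hy where "Hy = (\<lambda>X. H (yproj m X))"
  define Py where "Py l = (\<lambda>X. cl_pd l H (yproj m X))" for l
  define Qy where "Qy j l = (\<lambda>X. cl_pd j (cl_pd l H) (yproj m X))" for j l
  define G where "G = (\<lambda>X. cl_sum (\<lambda>l. Lj m l (Py l X)) {2..m})"
  define Gd where "Gd j = (\<lambda>X. cl_sum (\<lambda>l. Lj m l (Qy j l X)) {2..m})" for j
  define F0 where "F0 = Fexp m \<kappa> c s Hy G"
  define D where "D (j::nat) = (if j = 0 then Fexp m \<kappa> (\<lambda>X. lam * c X) (\<lambda>X. lam * s X) Hy G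
      else if j = 1 then Fexp m \<kappa> (\<lambda>X. - lam * s X) (\<lambda>X. lam * c X) Hy G
      else Fexp m \<kappa> c s (Py j) (Gd j))" for j
  have Sopen: "open S" unfolding S_def by (rule open_S[OF opn])
  have eG: "cl_elem m (G X)" for X unfolding G_def by (intro cl_sum_elem Lj_elem)
  have eQ: "cl_elem m (Qy j l X)" for j l X unfolding Qy_def by (intro clpd_elem eH)

  have dy: "dirac_y m H (yproj m X) = G X" for X
    unfolding dirac_y_def G_def Py_def cl_sum_def
  proof (rule ext, rule sum.cong[OF refl])
    fix A j assume "j \<in> {2..m}"
    then have "j \<in> {1..m}" by simp
    then show "cl_mult m (cl_gen j) (cl_pd j H (yproj m X)) A = Lj m j (cl_pd j H (yproj m X)) A"
      by (simp add: cl_mult_gen)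
  qed
  have fF: "(\<lambda>X. cl_add (cl_mult m (cl_exp_z lam X) (H (yproj m X)))
                    (cl_smul (- 1 / (2 * lam)) (cl_mult m (cl_exp_zbar lam X) (dirac_y m H (yproj m X))))) = F0"
  proof
    fix X
    show "cl_add (cl_mult m (cl_exp_z lam X) (H (yproj m X)))
                    (cl_smul (- 1 / (2 * lam)) (cl_mult m (cl_exp_zbar lam X) (dirac_y m H (yproj m X)))) = F0 X"
      unfolding dy mult_exp_z[OF eH m1] mult_exp_zbar[OF eG m1]
      unfolding F0_def Fexp_def c_def s_def Hy_def \<kappa>_def by simp
  qed

  define c' where "c' (j::nat) = (\<lambda>X. if j = 0 then lam * c X else if j = 1 then - lam * s X else 0)" for j
  define s' where "s' (j::nat) = (\<lambda>X. if j = 0 then lam * s X else if j = 1 then lam * c X else 0)" for j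
  have dc: "((\<lambda>t. c (X(j := t))) has_field_derivative c' j X) (at (X j))" for j X
    using der_c[of lam X j] unfolding c_def s_def c'_def by simp
  have ds: "((\<lambda>t. s (X(j := t))) has_field_derivative s' j X) (at (X j))" for j X
    using der_s[of lam X j] unfolding c_def s_def s'_def by simp
  have hP: "hd j S (Py l) (Qy j l)" if "j \<in> {2..m}" "l \<in> {2..m}" for j l
    unfolding S_def Py_def Qy_def
  proof (rule hd_comp_in[OF that(1)])
    fix A Y assume "Y \<in> \<Omega>"
    then show "(\<lambda>t. cl_pd l H (Y(j := t)) A) field_differentiable (at (Y j))"
      unfolding pdH using d2[OF that] by blast
  qed
  have hF: "hd j S F0 (D j)" if j: "j \<in> {0..m}" for j
  proof (cases "j \<in> {2..m}")
    case True
    have hU: "hd j S Hy (Py j)" unfolding S_def Hy_def Py_def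
      by (rule hd_comp_in[OF True]) (rule d1[OF True])
    have hV: "hd j S G (Gd j)" unfolding G_def Gd_def
      by (intro hd_sum hd_Lj hP True) auto
    have z: "c' j = (\<lambda>X. 0)" "s' j = (\<lambda>X. 0)" using True unfolding c'_def s'_def by auto
    show ?thesis unfolding F0_def
      by (rule hd_cong[OF hd_Fexp[OF dc ds hU hV]]) (use True in \<open>simp add: z Fexp_zero2 add_zero_l D_def\<close>)
  next
    case False
    have hU: "hd j S Hy (\<lambda>X. cl_zero)" unfolding Hy_def by (rule hd_comp_out[OF False])
    have hV: "hd j S G (\<lambda>X. cl_zero)" unfolding G_def
    proof (rule hd_cong[OF hd_sum])
      show "hd j S (\<lambda>X. Lj m l (Py l X)) (\<lambda>X. Lj m l cl_zero)" if "l \<in> {2..m}" for l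
        unfolding Py_def by (intro hd_Lj hd_comp_out False)
    qed (simp_all add: cl_sum_zero)
    have j01: "j = 0 \<or> j = 1" using False j by auto
    show ?thesis unfolding F0_def
      by (rule hd_cong[OF hd_Fexp[OF dc ds hU hV]])
         (use j01 in \<open>auto simp: Fexp_zero1 add_zero_r D_def c'_def s'_def\<close>)
  qed

  have ccHy: "cc S Hy" unfolding cc_def S_def Hy_def
  proof
    fix A show "continuous_on {X. yproj m X \<in> \<Omega>} (\<lambda>X. H (yproj m X) A)"
      using slice_cont[OF opn, of m "\<lambda>y. H y A"] d1 c1 by blast
  qed
  have ccP: "cc S (Py l)" if "l \<in> {2..m}" for l unfolding S_def Py_def
    by (rule cc_comp) (simp add: pdH c1[OF that] del: pd_def)
  have ccQ: "cc S (Qy j l)" if "j \<in> {2..m}" "l \<in> {2..m}" for j l unfolding S_def Qy_def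
    by (rule cc_comp) (simp add: pdpdH c2[OF that] del: pd_def)
  have ccG: "cc S G" unfolding G_def by (intro cc_sum cc_Lj ccP) auto
  have ccGd: "cc S (Gd j)" if "j \<in> {2..m}" for j unfolding Gd_def by (intro cc_sum cc_Lj ccQ that) auto
  have ccc: "continuous_on S c" unfolding c_def by (intro continuous_intros)
  have ccs: "continuous_on S s" unfolding s_def by (intro continuous_intros)
  have ccD: "cc S (D j)" if "j \<in> {0..m}" for j
    unfolding D_def using that by (auto intro!: cc_Fexp ccHy ccG ccP ccGd ccc ccs continuous_intros)

  have eHy: "cl_elem m (Hy X)" for X unfolding Hy_def by (rule eH)
  have T0: "cl_sum (\<lambda>j. Lj m j (Gd j X)) {2..m} = cl_zero" if X: "X \<in> S" for X
  proof -
    have y: "yproj m X \<in> \<Omega>" using X unfolding S_def by simp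
    have sym: "Qy j l X = Qy l j X" if jl: "j \<in> {2..m}" "l \<in> {2..m}" for j l
    proof (cases "j = l")
      case True then show ?thesis by simp
    next
      case False
      show ?thesis unfolding Qy_def
      proof
        fix A
        have "pd l (pd j (\<lambda>y. H y A)) (yproj m X) = pd j (pd l (\<lambda>y. H y A)) (yproj m X)"
          by (rule schwarz[OF opn y False d1[OF jl(1)] d1[OF jl(2)] d2[OF jl(2) jl(1)] d2[OF jl(1) jl(2)]
                c2[OF jl(2) jl(1)] c2[OF jl(1) jl(2)]])
        then show "cl_pd j (cl_pd l H) (yproj m X) A = cl_pd l (cl_pd j H) (yproj m X) A"
          unfolding pdpdH by simp
      qed
    qed
    show ?thesis unfolding Gd_def
      by (rule harm_zero[where Q = "\<lambda>j l. Qy j l X"]) (use sym eQ lap[OF y] in \<open>auto simp: Qy_def\<close>)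
  qed

  have dirac_eq: "dirac m F X = cl_add (cl_pd 0 F X)
      (cl_add (Lj m 1 (cl_pd 1 F X)) (cl_sum (\<lambda>j. Lj m j (cl_pd j F X)) {2..m}))" for F X
  proof -
    have ins: "{1..m} = insert 1 {2..m}" using m by auto
    have "cl_sum (\<lambda>j. cl_mult m (cl_gen j) (cl_pd j F X)) {2..m} = cl_sum (\<lambda>j. Lj m j (cl_pd j F X)) {2..m}"
      unfolding cl_sum_def by (intro ext sum.cong refl) (simp add: cl_mult_gen)
    moreover have "cl_sum (\<lambda>j. cl_mult m (cl_gen j) (cl_pd j F X)) (insert 1 {2..m}) =
      cl_add (cl_mult m (cl_gen 1) (cl_pd 1 F X)) (cl_sum (\<lambda>j. cl_mult m (cl_gen j) (cl_pd j F X)) {2..m})"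
      by (rule cl_sum_insert) auto
    ultimately show ?thesis unfolding dirac_def ins cl_mult_gen1[OF m1] by simp
  qed

  have dzero: "dirac m F0 X = cl_zero" if X: "X \<in> S" for X
  proof -
    have pdD: "cl_pd j F0 X = D j X" if "j \<in> {0..m}" for j using hd_clpd[OF hF[OF that] X] .
    have e2: "cl_sum (\<lambda>j. Lj m j (cl_pd j F0 X)) {2..m} =
        cl_sum (\<lambda>j. Lj m j (Ev m \<kappa> (c X) (s X) (Py j X) (Gd j X))) {2..m}"
      unfolding cl_sum_def by (intro ext sum.cong refl) (auto simp: pdD D_def Fexp_Ev)
    have e0: "cl_pd 0 F0 X = Ev m \<kappa> (lam * c X) (lam * s X) (Hy X) (G X)"
      using pdD[of 0] by (simp add: D_def Fexp_Ev)
    have e1: "cl_pd 1 F0 X = Ev m \<kappa> (- lam * s X) (lam * c X) (Hy X) (G X)"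
      using pdD[of 1] m by (simp add: D_def Fexp_Ev)
    show ?thesis unfolding dirac_eq e0 e1 e2
      by (rule key_alg[OF m lam \<kappa>_def eHy eG]) (simp_all add: G_def T0[OF X])
  qed

  have D0: "D 0 X = cl_smul lam (F0 X)" for X
    by (simp add: D_def F0_def Fexp_def cl_add_def cl_smul_def fun_eq_iff algebra_simps)
  have iter: "\<forall>X\<in>S. (hyperD m ^^ k) F0 X = cl_smul (lam ^ k) (F0 X)" for k
  proof (induction k)
    case 0 show ?case by (simp add: cl_smul_def)
  next
    case (Suc k)
    define Fk where "Fk = (hyperD m ^^ k) F0"
    have hk: "hd j S Fk (\<lambda>X. cl_smul (lam^k) (D j X))" if "j \<in> {0..m}" for j
      by (rule hd_local[OF Sopen hd_csmul[OF hF[OF that]]]) (use Suc.IH in \<open>simp add: Fk_def\<close>)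
    show ?case
    proof
      fix X assume X: "X \<in> S"
      have pk: "cl_pd j Fk X = cl_smul (lam^k) (cl_pd j F0 X)" if "j \<in> {0..m}" for j
        using hd_clpd[OF hk[OF that] X] hd_clpd[OF hF[OF that] X] by simp
      have "dirac m Fk X = cl_smul (lam^k) (dirac m F0 X)" by (rule dirac_scale) (rule pk)
      then have "dirac m Fk X = cl_zero" using dzero[OF X] by (simp add: cl_smul_def cl_zero_def)
      then have "hyperD m Fk X = cl_pd 0 Fk X" by (rule hyperD_from)
      also have "\<dots> = cl_smul (lam^k) (D 0 X)" using hd_clpd[OF hk X] by simp
      also have "\<dots> = cl_smul (lam ^ Suc k) (F0 X)" by (simp add: D0 cl_smul_def fun_eq_iff)
      finally show "(hyperD m ^^ Suc k) F0 X = cl_smul (lam ^ Suc k) (F0 X)" by (simp add: Fk_def)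
    qed
  qed
  have Lop0: "Lop m n a F0 X = cl_zero" if X: "X \<in> S" for X
  proof -
    have "Lop m n a F0 X = cl_sum (\<lambda>i. cl_smul (a i) (cl_smul (lam ^ (n - i)) (F0 X))) {0..n}"
      unfolding Lop_def using iter X by simp
    also have "\<dots> = cl_zero"
    proof
      fix C
      have "(\<Sum>i=0..n. a i * (lam ^ (n - i) * F0 X C)) = (\<Sum>i=0..n. a i * lam ^ (n - i)) * F0 X C"
        by (simp add: sum_distrib_right mult.assoc)
      then show "cl_sum (\<lambda>i. cl_smul (a i) (cl_smul (lam ^ (n - i)) (F0 X))) {0..n} C = cl_zero C"
        using poly by (simp add: cl_sum_def cl_smul_def cl_zero_def)
    qed
    finally show ?thesis .
  qed
  have LM: "left_monogenic m S F0"
    unfolding left_monogenic_def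
  proof (intro conjI allI ballI)
    show "open S" by (rule Sopen)
  next
    fix X assume "X \<in> S" then show "dirac m F0 X = cl_zero" by (rule dzero)
  next
    fix A
    show "coord_C1 {0..m} S (\<lambda>X. F0 X A)" unfolding coord_C1_def
    proof
      fix j assume j: "j \<in> {0..m}"
      have "\<forall>X\<in>S. (\<lambda>t. F0 (X(j := t)) A) field_differentiable (at (X j))"
        using hF[OF j] unfolding hd_def field_differentiable_def by blast
      moreover have "continuous_on S (pd j (\<lambda>X. F0 X A))"
      proof (rule continuous_on_eq)
        show "continuous_on S (\<lambda>X. D j X A)" using ccD[OF j] unfolding cc_def by blast
        show "\<And>X. X \<in> S \<Longrightarrow> D j X A = pd j (\<lambda>X. F0 X A) X" using hd_pd[OF hF[OF j]] by simp
      qed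
      ultimately show "(\<forall>X\<in>S. (\<lambda>t. F0 (X(j := t)) A) field_differentiable (at (X j))) \<and>
          continuous_on S (pd j (\<lambda>X. F0 X A))" by blast
    qed
  qed
  show ?thesis unfolding Let_def fF S_def[symmetric] using LM Lop0 by blast
qed

end
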